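(* Let $X,Y$ be Banach spaces, $f:X\to Y$ a function, $G:Y\rightrightarrows X$ a multifunction, $L,M>0$, and $(\overline{x},\overline{y},\overline{z})\in X\times Y\times Y$ with $\overline{y}=f(\overline{x})$ and $(\overline{z},\overline{x})\in\operatorname{Gr}G$. Suppose: (i) $f$ is Lipschitz continuous around $\overline{x}$; (ii) $\operatorname{Gr}G$ is locally closed around $(\overline{z},\overline{x})$; (iii) $f$ is $L$-open around $(\overline{x},\overline{y})$; (iv) $G$ is $M$-open around $(\overline{z},\overline{x})$; (v) $LM>1$. Then $f-G^{-1}$ is $(L-M^{-1})$-open around $(\overline{x},\overline{y}-\overline{z})$.
   Context: $B(x,r)$ denotes the open ball. $(f-G^{-1})(x)=\{f(x)-z: x\in G(z)\}$. A set-valued map $T:U\rightrightarrows V$ (a function being viewed as a single-valued map) is $L$-open around $(a,b)\in\operatorname{Gr}T$ if there exist $\varepsilon>0$ and neighborhoods $U_0$ of $a$, $V_0$ of $b$ such that for every $\rho\in]0,\varepsilon[$ and every $(u,v)\in\operatorname{Gr}T\cap(U_0\times V_0)$, $B(v,\rho L)\subset T(B(u,\rho))$. $\operatorname{Gr}G$ locally closed around a point means that its intersection with the closure of some neighborhood of that point is closed. *)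

theory Defs
  imports "HOL-Analysis.Analysis"
begin

definition graph :: "('a \<Rightarrow> 'b set) \<Rightarrow> ('a \<times> 'b) set" where
  "graph T = {(u, v). v \<in> T u}"

definition lin_open_around ::
  "('a::metric_space \<Rightarrow> 'b::real_normed_vector set) \<Rightarrow> real \<Rightarrow> 'a \<Rightarrow> 'b \<Rightarrow> bool" where
  "lin_open_around T L a b \<longleftrightarrow>
     (\<exists>\<epsilon>>0. \<exists>U0 V0. a \<in> interior U0 \<and> b \<in> interior V0 \<and>
        (\<forall>\<rho>. 0 < \<rho> \<and> \<rho> < \<epsilon> \<longrightarrow>
           (\<forall>u v. (u, v) \<in> graph T \<inter> (U0 \<times> V0) \<longrightarrow>
              ball v (\<rho> * L) \<subseteq> \<Union> (T ` ball u \<rho>))))"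

definition single_valued_map :: "('a \<Rightarrow> 'b) \<Rightarrow> 'a \<Rightarrow> 'b set" where
  "single_valued_map f = (\<lambda>x. {f x})"

definition minus_inverse :: "('a \<Rightarrow> 'b::ab_group_add) \<Rightarrow> ('b \<Rightarrow> 'a set) \<Rightarrow> 'a \<Rightarrow> 'b set" where
  "minus_inverse f G = (\<lambda>x. {f x - z | z. x \<in> G z})"

definition lipschitz_around :: "('a::metric_space \<Rightarrow> 'b::metric_space) \<Rightarrow> 'a \<Rightarrow> bool" where
  "lipschitz_around f a \<longleftrightarrow> (\<exists>U K. a \<in> interior U \<and> K-lipschitz_on U f)"

definition locally_closed_around :: "'a::topological_space set \<Rightarrow> 'a \<Rightarrow> bool" where
  "locally_closed_around S p \<longleftrightarrow> (\<exists>W. p \<in> interior W \<and> closed (S \<inter> closure W))"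

end

theory Submission
  imports Defs
begin

lemma iter_core:
  fixes f :: "'x::banach \<Rightarrow> 'y::banach" and G :: "'y \<Rightarrow> 'x set"
  assumes L2: "L2 > 0" and M2: "M2 > 0" and cdef: "c = 1/(L2*M2)" and c1: "c < 1"
    and Adef: "A = norm (w - (f u - z0))"
    and Bxdef: "Bx = A/(L2*(1-c))" and Bzdef: "Bz = A*c/(1-c)"
    and u0: "u \<in> G z0"
    and step: "\<And>x z r. x \<in> G z \<Longrightarrow> norm (x-u) \<le> Bx \<Longrightarrow> norm (z - z0) \<le> Bz \<Longrightarrow> norm r \<le> A \<Longrightarrow>
        \<exists>x' z'. x' \<in> G z' \<and> f x' = f x + r \<and> norm (x'-x) \<le> norm r/L2 \<and> norm (z'-z) \<le> c*norm r"
    and cont: "continuous_on (cball u Bx) f"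
    and clS: "closed (graph G \<inter> S)"
    and inS: "\<And>x z. norm (x-u) \<le> Bx \<Longrightarrow> norm (z-z0) \<le> Bz \<Longrightarrow> (z,x) \<in> S"
  shows "\<exists>x z'. norm (x-u) \<le> Bx \<and> x \<in> G z' \<and> w = f x - z'"
proof -
  have c0: "c > 0" using cdef L2 M2 by simp
  have A0: "A \<ge> 0" using Adef by simp
  define R where "R = (\<lambda>p. w - f (fst p) + snd p)"
  define Q where "Q = (\<lambda>p q. fst q \<in> G (snd q) \<and> f (fst q) = f (fst p) + R p \<and>
       norm (fst q - fst p) \<le> norm (R p)/L2 \<and> norm (snd q - snd p) \<le> c * norm (R p))"
  define nxt where "nxt = (\<lambda>p. SOME q. Q p q)"
  define sq where "sq = (\<lambda>n. (nxt ^^ n) (u, z0))"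
  define xs where "xs = (\<lambda>n. fst (sq n))"
  define zs where "zs = (\<lambda>n. snd (sq n))"
  have sq0: "sq 0 = (u, z0)" and sqS: "\<And>n. sq (Suc n) = nxt (sq n)" by (simp_all add: sq_def)
  have Bx0: "Bx \<ge> 0" and Bz0: "Bz \<ge> 0" using Bxdef Bzdef A0 c0 c1 L2 by auto
  have Qstep: "Q (sq n) (sq (Suc n))"
    if h: "xs n \<in> G (zs n)" "norm (R (sq n)) \<le> c^n * A" "norm (xs n - u) \<le> Bx * (1 - c^n)"
       "norm (zs n - z0) \<le> Bz * (1 - c^n)" for n
  proof -
    have cn: "0 \<le> c^n" "c^n \<le> 1" using c0 c1 by (auto simp: power_le_one)
    have "norm (xs n - u) \<le> Bx" using that(3) cn Bx0 by (smt (verit) mult_left_le)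
    moreover have "norm (zs n - z0) \<le> Bz" using that(4) cn Bz0 by (smt (verit) mult_left_le)
    moreover have "norm (R (sq n)) \<le> A" using that(2) cn A0 by (smt (verit) mult_left_le_one_le)
    ultimately obtain x' z' where "x' \<in> G z' \<and> f x' = f (xs n) + R (sq n) \<and> norm (x'-xs n) \<le> norm (R (sq n))/L2 \<and> norm (z'-zs n) \<le> c*norm (R (sq n))"
      using step[OF h(1)] by blast
    then have "Q (sq n) (x', z')" unfolding Q_def xs_def zs_def by simp
    then have "Q (sq n) (nxt (sq n))" unfolding nxt_def by (rule someI)
    then show ?thesis by (simp add: sqS)
  qed
  have inv: "xs n \<in> G (zs n) \<and> norm (R (sq n)) \<le> c^n * A \<and> norm (xs n - u) \<le> Bx * (1 - c^n)
       \<and> norm (zs n - z0) \<le> Bz * (1 - c^n)" for n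
  proof (induction n)
    case 0
    then show ?case using u0 Adef by (simp add: xs_def zs_def sq0 R_def algebra_simps)
  next
    case (Suc n)
    then have Q: "Q (sq n) (sq (Suc n))" using Qstep by blast
    have Rn: "R (sq (Suc n)) = zs (Suc n) - zs n"
      using Q unfolding Q_def R_def xs_def zs_def by (simp add: algebra_simps)
    have 1: "xs (Suc n) \<in> G (zs (Suc n))" using Q by (simp add: Q_def xs_def zs_def)
    have 2: "norm (R (sq (Suc n))) \<le> c^Suc n * A"
    proof -
      have "norm (R (sq (Suc n))) \<le> c * norm (R (sq n))" using Q Rn by (simp add: Q_def zs_def)
      also have "\<dots> \<le> c * (c^n*A)" using Suc c0 by (simp add: mult_left_mono)
      finally show ?thesis by simp
    qed
    have 3: "norm (xs (Suc n) - u) \<le> Bx * (1 - c^Suc n)"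
    proof -
      have "norm (xs (Suc n) - u) \<le> norm (xs (Suc n) - xs n) + norm (xs n - u)"
        using norm_triangle_ineq[of "xs (Suc n) - xs n" "xs n - u"] by simp
      also have "\<dots> \<le> c^n*A/L2 + Bx * (1 - c^n)"
      proof -
        have "norm (xs (Suc n) - xs n) \<le> norm (R (sq n))/L2" using Q by (simp add: Q_def xs_def)
        also have "\<dots> \<le> c^n*A/L2" using Suc L2 by (simp add: divide_right_mono)
        finally show ?thesis using Suc by simp
      qed
      also have "\<dots> = Bx * (1 - c^Suc n)"
        using c1 L2 unfolding Bxdef by (simp add: field_simps)
      finally show ?thesis .
    qed
    have 4: "norm (zs (Suc n) - z0) \<le> Bz * (1 - c^Suc n)"
    proof -
      have "norm (zs (Suc n) - z0) \<le> norm (zs (Suc n) - zs n) + norm (zs n - z0)"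
        using norm_triangle_ineq[of "zs (Suc n) - zs n" "zs n - z0"] by simp
      also have "\<dots> \<le> c^Suc n*A + Bz * (1 - c^n)"
      proof -
        have "norm (zs (Suc n) - zs n) \<le> c^Suc n * A" using 2 Rn by simp
        then show ?thesis using Suc by simp
      qed
      also have "\<dots> = Bz * (1 - c^Suc n)"
        using c1 unfolding Bzdef by (simp add: field_simps)
      finally show ?thesis .
    qed
    show ?case using 1 2 3 4 by blast
  qed
  have Qall: "Q (sq n) (sq (Suc n))" for n using Qstep inv by blast
  have cn0: "0 \<le> c^n" "c^n \<le> 1" for n using c0 c1 by (auto simp: power_le_one)
  have xB: "norm (xs n - u) \<le> Bx" for n using inv[of n] cn0[of n] Bx0 by (smt (verit) mult_left_le)
  have zB: "norm (zs n - z0) \<le> Bz" for n using inv[of n] cn0[of n] Bz0 by (smt (verit) mult_left_le)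
  have geo: "summable (\<lambda>n. K * c^n)" for K
    using c0 c1 by (intro summable_mult summable_geometric) simp
  have dx: "norm (xs (Suc n) - xs n) \<le> A/L2 * c^n" for n
  proof -
    have "norm (xs (Suc n) - xs n) \<le> norm (R (sq n))/L2" using Qall[of n] by (simp add: Q_def xs_def)
    also have "\<dots> \<le> c^n*A/L2" using inv[of n] L2 by (simp add: divide_right_mono)
    finally show ?thesis by (simp add: mult.commute)
  qed
  have dz: "norm (zs (Suc n) - zs n) \<le> c*A * c^n" for n
  proof -
    have "norm (zs (Suc n) - zs n) \<le> c * norm (R (sq n))" using Qall[of n] by (simp add: Q_def zs_def)
    also have "\<dots> \<le> c*(c^n*A)" using inv[of n] c0 by (simp add: mult_left_mono)
    finally show ?thesis by (simp add: mult_ac)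
  qed
  have sx: "summable (\<lambda>n. xs (Suc n) - xs n)"
    by (rule summable_comparison_test'[OF geo[of "A/L2"]]) (use dx in blast)
  have sz: "summable (\<lambda>n. zs (Suc n) - zs n)"
    by (rule summable_comparison_test'[OF geo[of "c*A"]]) (use dz in blast)
  define xl where "xl = u + suminf (\<lambda>n. xs (Suc n) - xs n)"
  define zl where "zl = z0 + suminf (\<lambda>n. zs (Suc n) - zs n)"
  have xs0: "xs 0 = u" and zs0: "zs 0 = z0" by (simp_all add: xs_def zs_def sq0)
  have xlim: "xs \<longlonglongrightarrow> xl"
  proof -
    have "(\<lambda>n. u + (\<Sum>i<n. xs (Suc i) - xs i)) \<longlonglongrightarrow> xl"
      unfolding xl_def by (intro tendsto_add tendsto_const summable_LIMSEQ sx)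
    then show ?thesis by (simp add: sum_lessThan_telescope xs0)
  qed
  have zlim: "zs \<longlonglongrightarrow> zl"
  proof -
    have "(\<lambda>n. z0 + (\<Sum>i<n. zs (Suc i) - zs i)) \<longlonglongrightarrow> zl"
      unfolding zl_def by (intro tendsto_add tendsto_const summable_LIMSEQ sz)
    then show ?thesis by (simp add: sum_lessThan_telescope zs0)
  qed
  have xlB: "norm (xl - u) \<le> Bx"
    by (rule Lim_norm_ubound[OF trivial_limit_sequentially tendsto_diff[OF xlim tendsto_const]])
       (use xB in auto)
  have zlB: "norm (zl - z0) \<le> Bz"
    by (rule Lim_norm_ubound[OF trivial_limit_sequentially tendsto_diff[OF zlim tendsto_const]])
       (use zB in auto)
  have fx: "(\<lambda>n. f (xs n)) \<longlonglongrightarrow> f xl"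
    by (rule continuous_on_tendsto_compose[OF cont xlim])
       (use xlB xB in \<open>auto simp: dist_norm norm_minus_commute\<close>)
  have R1: "(\<lambda>n. R (sq n)) \<longlonglongrightarrow> w - f xl + zl"
  proof -
    have "(\<lambda>n. w - f (xs n) + zs n) \<longlonglongrightarrow> w - f xl + zl" using fx zlim by (intro tendsto_intros)
    then show ?thesis by (simp add: R_def xs_def zs_def)
  qed
  have R2: "(\<lambda>n. R (sq n)) \<longlonglongrightarrow> 0"
  proof (rule Lim_null_comparison)
    show "\<forall>\<^sub>F n in sequentially. norm (R (sq n)) \<le> A * c^n" using inv by (simp add: mult.commute)
    show "(\<lambda>n. A * c^n) \<longlonglongrightarrow> 0"
      using c0 c1 by (intro tendsto_mult_right_zero LIMSEQ_power_zero) simp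
  qed
  have weq: "w = f xl - zl" using LIMSEQ_unique[OF R1 R2] by (simp add: algebra_simps)
  have "(zl, xl) \<in> graph G \<inter> S"
  proof (rule closed_sequentially[OF clS])
    show "(\<lambda>n. (zs n, xs n)) \<longlonglongrightarrow> (zl, xl)" using zlim xlim by (rule tendsto_Pair)
    show "(zs n, xs n) \<in> graph G \<inter> S" for n using inv[of n] inS[OF xB zB] by (simp add: graph_def)
  qed
  then have "xl \<in> G zl" by (simp add: graph_def)
  then show ?thesis using xlB weq by blast
qed

theorem corollary3p4:
  fixes f :: "'x::banach \<Rightarrow> 'y::banach"
    and G :: "'y \<Rightarrow> 'x set"
    and L M :: real and xb :: 'x and yb zb :: 'y
  assumes "L > 0" and "M > 0"
    and "yb = f xb" and "(zb, xb) \<in> graph G"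
    and "lipschitz_around f xb"
    and "locally_closed_around (graph G) (zb, xb)"
    and "lin_open_around (single_valued_map f) L xb yb"
    and "lin_open_around G M zb xb"
    and "L * M > 1"
  shows "lin_open_around (minus_inverse f G) (L - 1 / M) xb (yb - zb)"
proof -
  have L0: "L > 0" and M0: "M > 0" using assms by auto
  have LM: "L - 1/M > 0" using assms(1,2,9) by (simp add: field_simps)
  obtain U1 K where U1: "xb \<in> interior U1" and lipK: "K-lipschitz_on U1 f"
    using assms(5) unfolding lipschitz_around_def by blast
  have K0: "0 \<le> K" using lipK by (rule lipschitz_on_nonneg)
  obtain W where W1: "(zb, xb) \<in> interior W" and Wc: "closed (graph G \<inter> closure W)"
    using assms(6) unfolding locally_closed_around_def by blast
  obtain e1 U0 V0 where e1: "e1 > 0" and U0: "xb \<in> interior U0" and V0: "yb \<in> interior V0"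
    and fo: "\<And>\<rho> u v. 0 < \<rho> \<Longrightarrow> \<rho> < e1 \<Longrightarrow> (u, v) \<in> graph (single_valued_map f) \<inter> (U0 \<times> V0) \<Longrightarrow>
       ball v (\<rho> * L) \<subseteq> \<Union> (single_valued_map f ` ball u \<rho>)"
    using assms(7) unfolding lin_open_around_def by blast
  obtain e2 Z0 X0 where e2: "e2 > 0" and Z0: "zb \<in> interior Z0" and X0: "xb \<in> interior X0"
    and go: "\<And>\<rho> u v. 0 < \<rho> \<Longrightarrow> \<rho> < e2 \<Longrightarrow> (u, v) \<in> graph G \<inter> (Z0 \<times> X0) \<Longrightarrow>
       ball v (\<rho> * M) \<subseteq> \<Union> (G ` ball u \<rho>)"
    using assms(8) unfolding lin_open_around_def by blast
  have fo': "\<exists>x'. norm (x' - x) < \<rho> \<and> f x' = y"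
    if "0 < \<rho>" "\<rho> < e1" "x \<in> U0" "f x \<in> V0" "norm (y - f x) < \<rho> * L" for \<rho> x y
  proof -
    have "y \<in> ball (f x) (\<rho>*L)" using that(5) by (simp add: dist_norm norm_minus_commute)
    then have "y \<in> \<Union> (single_valued_map f ` ball x \<rho>)"
      using fo[OF that(1,2), of x "f x"] that(3,4) by (auto simp: graph_def single_valued_map_def)
    then show ?thesis by (auto simp: single_valued_map_def dist_norm norm_minus_commute)
  qed
  have go': "\<exists>z'. norm (z' - z) < \<rho> \<and> x' \<in> G z'"
    if "0 < \<rho>" "\<rho> < e2" "z \<in> Z0" "x \<in> X0" "x \<in> G z" "norm (x' - x) < \<rho> * M" for \<rho> z x x'
  proof -
    have "x' \<in> ball x (\<rho>*M)" using that(6) by (simp add: dist_norm norm_minus_commute)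
    then have "x' \<in> \<Union> (G ` ball z \<rho>)"
      using go[OF that(1,2), of z x] that(3,4,5) by (auto simp: graph_def)
    then show ?thesis by (auto simp: dist_norm norm_minus_commute)
  qed
  obtain ew where ew: "ew > 0" "ball (zb,xb) ew \<subseteq> W"
    using W1 interior_subset mem_interior by (metis subset_trans)
  have Wpair: "(z,x) \<in> W" if "norm (z - zb) < ew/2" "norm (x - xb) < ew/2" for z x
  proof -
    have "dist (zb,xb) (z,x) \<le> dist zb z + dist xb x"
      unfolding dist_Pair_Pair by (rule sqrt_sum_squares_le_sum) auto
    also have "\<dots> < ew" using that by (simp add: dist_norm norm_minus_commute)
    finally show ?thesis using ew by auto
  qed
  obtain a1 where a1: "a1 > 0" "ball xb a1 \<subseteq> U1" using U1 mem_interior by blast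
  obtain a2 where a2: "a2 > 0" "ball xb a2 \<subseteq> U0" using U0 mem_interior by blast
  obtain a3 where a3: "a3 > 0" "ball xb a3 \<subseteq> X0" using X0 mem_interior by blast
  obtain b1 where b1: "b1 > 0" "ball yb b1 \<subseteq> V0" using V0 mem_interior by blast
  obtain ez where ez: "ez > 0" "ball zb ez \<subseteq> Z0" using Z0 mem_interior by blast
  define dz where "dz = min ez (ew/2)"
  define dx where "dx = min (min (min a1 a2) (min a3 (ew/2))) (min (b1/(K+1)) (dz/(2*(K+1))))"
  have dz0: "dz > 0" using ez ew by (simp add: dz_def)
  have dx0: "dx > 0" using a1 a2 a3 ew b1 dz0 K0 by (simp add: dx_def)
  have Kdx: "K * dx \<le> dz/2"
  proof -
    have "K * dx \<le> K * (dz/(2*(K+1)))" using K0 by (intro mult_left_mono) (auto simp: dx_def)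
    also have "\<dots> \<le> dz/2" using K0 dz0 by (simp add: field_simps)
    finally show ?thesis .
  qed
  have hx: "x \<in> U1 \<and> x \<in> U0 \<and> x \<in> X0 \<and> f x \<in> V0 \<and> norm (f x - yb) \<le> K * norm (x - xb) \<and> norm (x - xb) < ew/2"
    if "norm (x - xb) < dx" for x
  proof -
    have xb: "x \<in> ball xb dx" using that by (simp add: dist_norm norm_minus_commute)
    have x1: "x \<in> U1" using xb a1 by (auto simp: dx_def)
    have x2: "x \<in> U0" using xb a2 by (auto simp: dx_def)
    have x3: "x \<in> X0" using xb a3 by (auto simp: dx_def)
    have xb1: "xb \<in> U1" using a1 by auto
    have fl: "norm (f x - yb) \<le> K * norm (x - xb)"
      using lipschitz_onD[OF lipK x1 xb1] assms(3) by (simp add: dist_norm)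
    have "K * norm (x - xb) \<le> K * (b1/(K+1))"
      using K0 that by (intro mult_left_mono) (auto simp: dx_def)
    also have "\<dots> < b1" using K0 b1 by (simp add: field_simps)
    finally have "f x \<in> ball yb b1" using fl by (simp add: dist_norm norm_minus_commute)
    then have "f x \<in> V0" using b1 by auto
    moreover have "norm (x - xb) < ew/2" using that by (simp add: dx_def)
    ultimately show ?thesis using x1 x2 x3 fl by blast
  qed
  have hz: "z \<in> Z0 \<and> norm (z - zb) < ew/2" if "norm (z - zb) < dz" for z
  proof -
    have "z \<in> ball zb ez" using that by (simp add: dist_norm norm_minus_commute dz_def)
    then show ?thesis using ez that by (auto simp: dz_def)
  qed
  define eps where "eps = min (min (e1/2) (e2/L)) (min (dx/2) (dz*M/4))"
  have eps0: "eps > 0" using e1 e2 dx0 dz0 L0 M0 by (simp add: eps_def)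
  have main: "\<forall>\<rho>. 0 < \<rho> \<and> \<rho> < eps \<longrightarrow> (\<forall>u v. (u, v) \<in> graph (minus_inverse f G) \<inter> (ball xb (dx/2) \<times> ball (yb - zb) (dz/4))
      \<longrightarrow> ball v (\<rho> * (L - 1/M)) \<subseteq> \<Union> (minus_inverse f G ` ball u \<rho>))"
  proof (intro allI impI subsetI)
    fix \<rho> u v w
    assume rho: "0 < \<rho> \<and> \<rho> < eps"
      and uv: "(u, v) \<in> graph (minus_inverse f G) \<inter> (ball xb (dx/2) \<times> ball (yb - zb) (dz/4))"
      and w: "w \<in> ball v (\<rho> * (L - 1/M))"
    have r0: "\<rho> > 0" using rho by simp
    have re1: "2*\<rho> < e1" and re2: "\<rho>*L < e2" and rdx: "\<rho> < dx/2" and rdz: "\<rho> < dz*M/4"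
      using rho L0 by (auto simp: eps_def field_simps)
    from uv obtain z where vz: "v = f u - z" and uz: "u \<in> G z" and un: "norm (u - xb) < dx/2"
      and vn: "norm (v - (yb - zb)) < dz/4"
      by (auto simp: graph_def minus_inverse_def dist_norm norm_minus_commute)
    have fu: "norm (f u - yb) \<le> K * norm (u - xb)" using hx[of u] un dx0 by simp
    have zn: "norm (z - zb) < dz/2"
    proof -
      have "z - zb = (f u - yb) - (v - (yb - zb))" using vz by (simp add: algebra_simps)
      then have "norm (z - zb) \<le> norm (f u - yb) + norm (v - (yb - zb))"
        by (metis norm_triangle_ineq4)
      also have "\<dots> < K * (dx/2) + dz/4"
        using fu vn K0 un by (smt (verit) mult_left_mono)
      also have "\<dots> \<le> dz/2" using Kdx by simp
      finally show ?thesis .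
    qed
    define A where "A = norm (w - (f u - z))"
    have Alt: "A < \<rho> * (L - 1/M)" using w vz by (simp add: A_def dist_norm norm_minus_commute)
    have A0: "A \<ge> 0" by (simp add: A_def)
    define s where "s = A/\<rho>"
    have s0: "s \<ge> 0" and sLM: "s < L - 1/M" using A0 r0 Alt by (auto simp: s_def field_simps)
    define h where "h = (L - 1/M - s)/2"
    have h0: "h > 0" using sLM by (simp add: h_def)
    define L2 where "L2 = max (L/2) (L - h/2)"
    define M2 where "M2 = max (M/2) (M/(1+M*h/2))"
    have L2a: "L2 > 0" "L2 < L" "L2 \<ge> L/2" "L2 \<ge> L - h/2" using L0 h0 by (auto simp: L2_def)
    have Mh: "M/(1+M*h/2) < M"
    proof -
      have "1 < 1 + M*h/2" using M0 h0 by simp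
      then have "M/(1+M*h/2) < M/1" using M0 by (intro divide_strict_left_mono) auto
      then show ?thesis by simp
    qed
    have M2a: "M2 > 0" "M2 < M" "M2 \<ge> M/2" using M0 h0 Mh by (auto simp: M2_def)
    have M2b: "1/M2 \<le> 1/M + h/2"
    proof -
      have "1+M*h/2 > 0" using M0 h0 by (simp add: add_pos_pos)
      then have p: "M/(1+M*h/2) > 0" using M0 by simp
      have "M/(1+M*h/2) \<le> M2" by (simp add: M2_def)
      moreover have "0 < M2 * (M/(1+M*h/2))" by (rule mult_pos_pos[OF M2a(1) p])
      ultimately have "1/M2 \<le> 1/(M/(1+M*h/2))" by (intro divide_left_mono) auto
      also have "\<dots> = 1/M + h/2" using M0 h0 by (simp add: field_simps)
      finally show ?thesis .
    qed
    have gap: "L2 - 1/M2 > s" proof -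
      have "2*h = L - 1/M - s" by (simp add: h_def)
      then show ?thesis using L2a(4) M2b h0 by linarith
    qed
    have gap0: "L2 - 1/M2 > 0" using gap s0 by linarith
    have LM2: "L2 * M2 > 1" using gap0 M2a by (simp add: field_simps)
    have Agap: "A < \<rho> * (L2 - 1/M2)" using gap r0 by (simp add: s_def field_simps)
    define c where "c = 1/(L2*M2)"
    have c0: "c > 0" and c1: "c < 1" using LM2 by (auto simp: c_def)
    define Bx where "Bx = A/(L2*(1-c))"
    define Bz where "Bz = A*c/(1-c)"
    have LM2': "L2*M2 - 1 \<noteq> 0" "L2*(L2*M2) - L2 \<noteq> 0" using LM2 L2a(1) by (auto simp: algebra_simps)
    have Bxe: "Bx = A/(L2 - 1/M2)" using L2a M2a LM2' by (simp add: Bx_def c_def field_simps)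
    have Bxr: "Bx < \<rho>" using Agap gap0 by (simp add: Bxe field_simps)
    have Bze: "Bz = A/(M2*(L2 - 1/M2))" using L2a M2a LM2 LM2' by (simp add: Bz_def c_def field_simps)
    have Bzr: "Bz < dz/2"
    proof -
      have "Bz = Bx/M2" by (simp add: Bze Bxe)
      also have "\<dots> < \<rho>/M2" using Bxr M2a(1) by (simp add: divide_strict_right_mono)
      also have "\<dots> \<le> \<rho>/(M/2)" using M2a r0 M0 by (intro divide_left_mono) auto
      also have "\<dots> < dz/2" using rdz M0 by (simp add: field_simps)
      finally show ?thesis .
    qed
    have AL: "A < \<rho> * L" using Alt M0 r0 by (smt (verit) mult_left_mono divide_pos_pos)
    have near: "norm (x - xb) < dx \<and> norm (z' - zb) < dz"
      if "norm (x - u) \<le> Bx" "norm (z' - z) \<le> Bz" for x z'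
    proof -
      have "norm (x - xb) \<le> norm (x - u) + norm (u - xb)"
        using norm_triangle_ineq[of "x - u" "u - xb"] by simp
      moreover have "norm (z' - zb) \<le> norm (z' - z) + norm (z - zb)"
        using norm_triangle_ineq[of "z' - z" "z - zb"] by simp
      ultimately show ?thesis using that Bxr Bzr rdx un zn by linarith
    qed
    have step: "\<exists>x' z''. x' \<in> G z'' \<and> f x' = f x + r \<and> norm (x'-x) \<le> norm r/L2 \<and> norm (z''-z') \<le> c*norm r"
      if st: "x \<in> G z'" "norm (x-u) \<le> Bx" "norm (z' - z) \<le> Bz" "norm r \<le> A" for x z' r
    proof (cases "r = 0")
      case True
      then show ?thesis using that(1) by (intro exI[of _ x] exI[of _ z']) simp
    next
      case False
      have nx: "norm (x - xb) < dx" and nz: "norm (z' - zb) < dz" using near[OF that(2,3)] by auto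
      have hxx: "x \<in> U0" "f x \<in> V0" "x \<in> X0" using hx[OF nx] by auto
      have hzz: "z' \<in> Z0" using hz[OF nz] by auto
      define \<rho>1 where "\<rho>1 = norm r / L2"
      have r1: "\<rho>1 > 0" using False L2a by (simp add: \<rho>1_def)
      have r1e: "\<rho>1 < e1"
      proof -
        have "\<rho>1 \<le> A/L2" using that(4) L2a by (simp add: \<rho>1_def divide_right_mono)
        also have "\<dots> \<le> A/(L/2)" using A0 L2a L0 by (intro divide_left_mono) auto
        also have "\<dots> < 2*\<rho>" using AL L0 by (simp add: field_simps)
        finally show ?thesis using re1 by simp
      qed
      have "norm ((f x + r) - f x) < \<rho>1 * L"
        using False L2a L0 by (simp add: \<rho>1_def field_simps)
      then obtain x' where x': "norm (x' - x) < \<rho>1" "f x' = f x + r"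
        using fo'[OF r1 r1e hxx(1,2)] by blast
      have cr: "norm (x' - x)/M2 \<le> c * norm r"
        using x'(1) M2a L2a by (simp add: \<rho>1_def c_def field_simps)
      show ?thesis
      proof (cases "x' = x")
        case True
        then show ?thesis using x' that(1) \<rho>1_def by (intro exI[of _ x'] exI[of _ z']) auto
      next
        case False
        define \<rho>2 where "\<rho>2 = norm (x' - x)/M2"
        have r2: "\<rho>2 > 0" using False M2a by (simp add: \<rho>2_def)
        have r2e: "\<rho>2 < e2"
        proof -
          have "\<rho>2 \<le> c * norm r" using cr by (simp add: \<rho>2_def)
          also have "\<dots> \<le> norm r" using c1 c0 by (intro mult_left_le_one_le) auto
          also have "\<dots> < e2" using that(4) AL re2 by linarith
          finally show ?thesis .
        qed
        have "norm (x' - x) < \<rho>2 * M" using False M2a M0 by (simp add: \<rho>2_def field_simps)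
        then obtain z'' where z'': "norm (z'' - z') < \<rho>2" "x' \<in> G z''"
          using go'[OF r2 r2e hzz hxx(3) st(1)] by blast
        show ?thesis using x' z'' cr \<rho>1_def \<rho>2_def
          by (intro exI[of _ x'] exI[of _ z'']) auto
      qed
    qed
    have cont: "continuous_on (cball u Bx) f"
    proof -
      have "cball u Bx \<subseteq> U1"
      proof
        fix x assume "x \<in> cball u Bx"
        then have "norm (x - u) \<le> Bx" by (simp add: dist_norm norm_minus_commute)
        then show "x \<in> U1" using hx near[of x z] Bz_def by (smt (verit) norm_zero diff_self c0 c1 A0 divide_nonneg_pos mult_nonneg_nonneg)
      qed
      then show ?thesis using lipK by (meson lipschitz_on_continuous_on lipschitz_on_subset)
    qed
    have inS: "(z', x) \<in> closure W" if "norm (x - u) \<le> Bx" "norm (z' - z) \<le> Bz" for x z'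
    proof -
      have "norm (x - xb) < dx" "norm (z' - zb) < dz" using near[OF that] by auto
      then have "(z', x) \<in> W" using hx hz Wpair by blast
      then show ?thesis using closure_subset by blast
    qed
    obtain x z' where res: "norm (x - u) \<le> Bx" "x \<in> G z'" "w = f x - z'"
      using iter_core[OF L2a(1) M2a(1) c_def c1 A_def Bx_def Bz_def uz step cont Wc inS] by blast
    have "x \<in> ball u \<rho>" using res(1) Bxr by (simp add: dist_norm norm_minus_commute)
    moreover have "w \<in> minus_inverse f G x" using res by (auto simp: minus_inverse_def)
    ultimately show "w \<in> \<Union> (minus_inverse f G ` ball u \<rho>)" by blast
  qed
  have "xb \<in> interior (ball xb (dx/2))" "yb - zb \<in> interior (ball (yb - zb) (dz/4))"
    using dx0 dz0 by auto
  then show ?thesis unfolding lin_open_around_def using eps0 main by blast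
qed

end
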